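(* Let $0\le\varepsilon<\frac12$ and consider a $(1-\varepsilon)$-satisfiable instance of \textsc{Min-Lin-Eq$(q)$-Full} on the complete graph with $n$ vertices and $m=\binom n2$ edges. Then the Voting Algorithm returns an assignment with at most $(\varepsilon+c_\varepsilon\varepsilon^2)m$ unsatisfied constraints, where $c_\varepsilon$ is a quantity depending on $\varepsilon$ with $\lim_{\varepsilon\to0}c_\varepsilon=16$.
   Context: \textsc{Min-Lin-Eq$(q)$-Full}: given a complete simple graph $G=(V,E)$, $n=|V|$, $m=\binom n2$, a positive integer $q$, and for each ordered pair $(u,v)$ of distinct vertices an integer $c_{uv}\in\{0,\dots,q-1\}$ with $c_{vu}\equiv -c_{uv}\pmod q$, each edge $uv$ carries the constraint $x_u-x_v\equiv c_{uv}\pmod q$ on assignments $x:V\to\{0,\dots,q-1\}$; the goal is to minimize the number of violated constraints. An instance is $(1-\varepsilon)$-satisfiable if some assignment satisfies at least $(1-\varepsilon)m$ constraints (equivalently $\varepsilon$ may be taken as $\mathrm{OPT_{val}}/m$). Voting Algorithm: for each choice of pivot $p\in V$: (1) label $p$ with $0$ and give each vertex $v\neq p$ the temporary label $\mathrm{TEMP}(v)=c_{vp}$; (2) for each vertex $v$, every vertex $u\notin\{p,v\}$ casts the vote $(c_{vu}+\mathrm{TEMP}(u))\bmod q$ for $v$; (3) each vertex $v$ receives as final label $\mathrm{FINAL}(v)$ a label occurring most often among its votes (ties broken arbitrarily). (4) Output, among all choices of $p$, the FINAL assignment violating the fewest constraints. *)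

theory Defs
  imports Complex_Main
begin

text \<open>Vertices of the complete graph are 0,...,n-1.  An instance is given by
  the constants c u v (for ordered pairs u \<noteq> v), an integer in {0..q-1},
  with c v u = -c u v (mod q).  Edge uv carries x u - x v = c u v (mod q).\<close>

definition valid_instance :: "nat \<Rightarrow> int \<Rightarrow> (nat \<Rightarrow> nat \<Rightarrow> int) \<Rightarrow> bool" where
  "valid_instance n q c \<longleftrightarrow> q > 0 \<and>
     (\<forall>u<n. \<forall>v<n. u \<noteq> v \<longrightarrow> c u v \<in> {0..<q} \<and> c v u mod q = (- c u v) mod q)"

definition assignment :: "nat \<Rightarrow> int \<Rightarrow> (nat \<Rightarrow> int) \<Rightarrow> bool" where
  "assignment n q x \<longleftrightarrow> (\<forall>v<n. x v \<in> {0..<q})"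

definition violations :: "nat \<Rightarrow> int \<Rightarrow> (nat \<Rightarrow> nat \<Rightarrow> int) \<Rightarrow> (nat \<Rightarrow> int) \<Rightarrow> nat" where
  "violations n q c x = card {e. \<exists>u v. e = {u, v} \<and> u < n \<and> v < n \<and> u \<noteq> v \<and>
                                   (x u - x v) mod q \<noteq> c u v mod q}"

text \<open>Number of votes equal to label a received by vertex v when p is the pivot:
  each u \<notin> {p,v} votes (c v u + TEMP u) mod q with TEMP u = c u p.\<close>
definition vote_count :: "nat \<Rightarrow> int \<Rightarrow> (nat \<Rightarrow> nat \<Rightarrow> int) \<Rightarrow> nat \<Rightarrow> nat \<Rightarrow> int \<Rightarrow> nat" where
  "vote_count n q c p v a = card {u. u < n \<and> u \<noteq> p \<and> u \<noteq> v \<and> (c v u + c u p) mod q = a}"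

definition plurality_label :: "nat \<Rightarrow> int \<Rightarrow> (nat \<Rightarrow> nat \<Rightarrow> int) \<Rightarrow> nat \<Rightarrow> nat \<Rightarrow> int \<Rightarrow> bool" where
  "plurality_label n q c p v a \<longleftrightarrow> a \<in> {0..<q} \<and>
     (\<forall>b\<in>{0..<q}. vote_count n q c p v b \<le> vote_count n q c p v a)"

text \<open>x is a possible output of the Voting Algorithm (for some arbitrary tie-breaking F):
  F p is the FINAL assignment for pivot p, and the output is a FINAL assignment
  with the fewest violated constraints among all pivots.\<close>
definition voting_output :: "nat \<Rightarrow> int \<Rightarrow> (nat \<Rightarrow> nat \<Rightarrow> int) \<Rightarrow> (nat \<Rightarrow> int) \<Rightarrow> bool" where
  "voting_output n q c x \<longleftrightarrow>
     (\<exists>F :: nat \<Rightarrow> nat \<Rightarrow> int.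
        (\<forall>p<n. \<forall>v<n. plurality_label n q c p v (F p v)) \<and>
        (\<exists>p<n. (\<forall>v<n. x v = F p v) \<and>
               (\<forall>p'<n. violations n q c (F p) \<le> violations n q c (F p'))))"

end

theory Submission
  imports Defs
begin


definition bad :: "int \<Rightarrow> (nat\<Rightarrow>nat\<Rightarrow>int) \<Rightarrow> (nat\<Rightarrow>int) \<Rightarrow> nat \<Rightarrow> nat \<Rightarrow> bool" where
  "bad q c x v u \<longleftrightarrow> (x v - x u) mod q \<noteq> c v u mod q"

definition deg :: "nat \<Rightarrow> int \<Rightarrow> (nat\<Rightarrow>nat\<Rightarrow>int) \<Rightarrow> (nat\<Rightarrow>int) \<Rightarrow> nat \<Rightarrow> nat" where
  "deg n q c x v = card {u. u < n \<and> u \<noteq> v \<and> bad q c x v u}"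

definition DD :: "nat \<Rightarrow> int \<Rightarrow> (nat\<Rightarrow>nat\<Rightarrow>int) \<Rightarrow> (nat\<Rightarrow>int) \<Rightarrow> nat" where
  "DD n q c x = (\<Sum>v<n. deg n q c x v)"

lemma bad_sym:
  assumes "valid_instance n q c" "u < n" "v < n" "u \<noteq> v"
  shows "bad q c x u v \<longleftrightarrow> bad q c x v u"
proof -
  have h: "q dvd (c v u + c u v)"
    using assms unfolding valid_instance_def
    by (metis diff_minus_eq_add mod_eq_dvd_iff)
  have "q dvd (x u - x v - c u v) \<longleftrightarrow> q dvd (x v - x u - c v u)"
  proof -
    have e: "x v - x u - c v u = - (x u - x v - c u v) - (c v u + c u v)" by simp
    show ?thesis unfolding e using h
      by (metis dvd_diff dvd_minus_iff add_diff_cancel diff_add_cancel dvd_add)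
  qed
  then show ?thesis unfolding bad_def by (simp add: mod_eq_dvd_iff)
qed

lemma card_pairs_DD:
  "card {(v,u). v < n \<and> u < n \<and> u \<noteq> v \<and> bad q c x v u} = DD n q c x"
proof -
  have "{(v,u). v < n \<and> u < n \<and> u \<noteq> v \<and> bad q c x v u} =
        Sigma {..<n} (\<lambda>v. {u. u < n \<and> u \<noteq> v \<and> bad q c x v u})" by auto
  then show ?thesis unfolding DD_def deg_def
    by (simp add: card_SigmaI)
qed

lemma viol_DD:
  assumes "valid_instance n q c"
  shows "2 * violations n q c x = DD n q c x"
proof -
  let ?P = "{(v,u). v < n \<and> u < n \<and> u \<noteq> v \<and> bad q c x v u}"
  let ?f = "\<lambda>(v,u). {v,u::nat}"
  have fin: "finite ?P"
    by (rule finite_subset[of _ "{..<n} \<times> {..<n}"]) auto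
  have img: "{e. \<exists>u v. e = {u, v} \<and> u < n \<and> v < n \<and> u \<noteq> v \<and>
                 (x u - x v) mod q \<noteq> c u v mod q} = ?f ` ?P"
    unfolding bad_def by (auto simp: image_def)
  have fib: "card {pr \<in> ?P. ?f pr = e} = 2" if "e \<in> ?f ` ?P" for e
  proof -
    obtain a b where ab: "a < n" "b < n" "b \<noteq> a" "bad q c x a b" "e = {a,b}"
      using \<open>e \<in> ?f ` ?P\<close> by auto
    have ba: "bad q c x b a" using bad_sym[OF assms] ab by blast
    have "{pr \<in> ?P. ?f pr = e} = {(a,b),(b,a)}"
      using ab ba by (auto simp: doubleton_eq_iff)
    then show ?thesis using ab by simp
  qed
  have "card ?P = (\<Sum>e\<in>?f ` ?P. card {pr \<in> ?P. ?f pr = e})"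
    using sum.group[OF fin finite_imageI[OF fin] subset_refl, where h="\<lambda>_. 1::nat" and g="?f"]
    by simp
  also have "\<dots> = (\<Sum>e\<in>?f ` ?P. 2)" using fib by simp
  also have "\<dots> = 2 * card (?f ` ?P)" by simp
  finally show ?thesis unfolding violations_def img card_pairs_DD by simp
qed



lemma sum_if_card: "finite A \<Longrightarrow> (\<Sum>u\<in>A. if P u then (1::int) else 0) = int (card {u\<in>A. P u})"
  by (simp add: sum.If_cases Int_def conj_commute)

lemma dvd_of_mod_eq: "(a::int) mod q = b mod q \<Longrightarrow> q dvd (a - b)"
  by (simp add: mod_eq_dvd_iff)

context
  fixes n :: nat and q :: int and c :: "nat \<Rightarrow> nat \<Rightarrow> int" and y z F :: "nat \<Rightarrow> int" and p :: nat
  assumes valid: "valid_instance n q c" and n3: "n \<ge> 3" and pn: "p < n"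
    and plur: "\<forall>v<n. plurality_label n q c p v (F v)"
    and z_def: "z = (\<lambda>v. (y v - y p) mod q)"
begin

lemma qpos: "q > 0" using valid unfolding valid_instance_def by simp

lemma antisym_dvd: "u < n \<Longrightarrow> v < n \<Longrightarrow> u \<noteq> v \<Longrightarrow> q dvd (c u v + c v u)"
  using valid unfolding valid_instance_def
  by (metis add.commute diff_minus_eq_add mod_eq_dvd_iff)

lemma z_range: "z v \<in> {0..<q}" using qpos z_def by simp

lemma zp: "z p = 0" using z_def by simp

lemma badz_eq: "bad q c z v u \<longleftrightarrow> bad q c y v u"
proof -
  have "(z v - z u) mod q = (y v - y u) mod q"
    unfolding z_def by (simp add: mod_diff_eq)
  then show ?thesis unfolding bad_def by simp
qed

lemma vote_ok:
  assumes "u < n" "v < n" "u \<noteq> p" "u \<noteq> v" "\<not> bad q c z v u" "\<not> bad q c z p u"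
  shows "(c v u + c u p) mod q = z v"
proof -
  have d1: "q dvd (z v - z u - c v u)" using assms(5) unfolding bad_def by (simp add: mod_eq_dvd_iff)
  have d2: "q dvd (- z u - c p u)" using assms(6) zp unfolding bad_def by (simp add: mod_eq_dvd_iff)
  have d3: "q dvd (c p u + c u p)" using antisym_dvd[of p u] assms pn by simp
  have "(c v u + c u p) - z v = - (z v - z u - c v u) + (c p u + c u p) + (- z u - c p u)" by simp
  then have "q dvd ((c v u + c u p) - z v)" using d1 d2 d3 by (metis dvd_add dvd_minus_iff)
  then have "(c v u + c u p) mod q = z v mod q" by (simp add: mod_eq_dvd_iff)
  then show ?thesis using z_range[of v] by simp
qed

lemma Fp: "F p = 0"
proof -
  have vp: "(c p u + c u p) mod q = 0" if "u < n" "u \<noteq> p" for u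
    using antisym_dvd[of p u] that pn by simp
  have "vote_count n q c p p 0 = card {u. u < n \<and> u \<noteq> p}"
    unfolding vote_count_def using vp by (metis (lifting))
  also have "{u. u < n \<and> u \<noteq> p} = {..<n} - {p}" by auto
  also have "card \<dots> = n - 1" using pn by simp
  finally have "vote_count n q c p p 0 = n - 1" .
  moreover have "vote_count n q c p p 0 \<le> vote_count n q c p p (F p)"
    using plur pn qpos unfolding plurality_label_def by simp
  ultimately have "vote_count n q c p p (F p) > 0" using n3 by simp
  then have "{u. u < n \<and> u \<noteq> p \<and> u \<noteq> p \<and> (c p u + c u p) mod q = F p} \<noteq> {}"
    unfolding vote_count_def by (metis card.empty less_irrefl)
  then obtain u where "u < n" "u \<noteq> p" "(c p u + c u p) mod q = F p" by auto
  then show ?thesis using vp by simp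
qed

definition "AA v = {u. u < n \<and> u \<noteq> p \<and> u \<noteq> v}"

lemma AA_card: "v < n \<Longrightarrow> v \<noteq> p \<Longrightarrow> card (AA v) = n - 2"
proof -
  assume "v < n" "v \<noteq> p"
  have "AA v = {..<n} - {p, v}" unfolding AA_def by auto
  moreover have "card ({..<n} - {p,v}) = n - 2"
    using \<open>v < n\<close> \<open>v \<noteq> p\<close> pn by (subst card_Diff_subset) auto
  ultimately show ?thesis by simp
qed

lemma AA_fin: "finite (AA v)" unfolding AA_def by simp

lemma vc_set: "vote_count n q c p v a = card {u\<in>AA v. (c v u + c u p) mod q = a}"
  unfolding vote_count_def AA_def by (rule arg_cong[where f=card]) auto

lemma vc_correct:
  assumes "v < n" "v \<noteq> p"
  shows "int (vote_count n q c p v (z v)) \<ge> int n - 2 - int (deg n q c z v) - int (deg n q c z p)"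
proof -
  let ?V = "{u\<in>AA v. (c v u + c u p) mod q = z v}"
  let ?B = "{u. u < n \<and> u \<noteq> v \<and> bad q c z v u}"
  let ?C = "{u. u < n \<and> u \<noteq> p \<and> bad q c z p u}"
  have "AA v \<subseteq> ?V \<union> ?B \<union> ?C"
    using vote_ok assms unfolding AA_def by auto
  then have "card (AA v) \<le> card (?V \<union> ?B \<union> ?C)"
    by (rule card_mono[rotated]) (auto simp: AA_def)
  also have "\<dots> \<le> card (?V \<union> ?B) + card ?C" by (rule card_Un_le)
  also have "\<dots> \<le> card ?V + card ?B + card ?C" using card_Un_le[of ?V ?B] by simp
  finally show ?thesis using AA_card[OF assms] n3
    unfolding vc_set deg_def by linarith
qed

lemma vc_sum_le:
  assumes "v < n" "v \<noteq> p" "a \<noteq> b"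
  shows "vote_count n q c p v a + vote_count n q c p v b \<le> n - 2"
proof -
  have "vote_count n q c p v a + vote_count n q c p v b =
     card ({u\<in>AA v. (c v u + c u p) mod q = a} \<union> {u\<in>AA v. (c v u + c u p) mod q = b})"
    unfolding vc_set using assms(3) AA_fin by (subst card_Un_disjoint) auto
  also have "\<dots> \<le> card (AA v)" by (rule card_mono[OF AA_fin]) auto
  finally show ?thesis using AA_card[OF assms(1,2)] by simp
qed

lemma S_cond:
  assumes "v < n" "F v \<noteq> z v"
  shows "int n - 2 \<le> 2 * int (deg n q c z v) + 2 * int (deg n q c z p)"
proof -
  have vp: "v \<noteq> p" using assms Fp zp by auto
  have "vote_count n q c p v (z v) \<le> vote_count n q c p v (F v)"
    using plur assms z_range[of v] unfolding plurality_label_def by auto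
  moreover have "vote_count n q c p v (F v) + vote_count n q c p v (z v) \<le> n - 2"
    using vc_sum_le[OF assms(1) vp] assms(2) by simp
  moreover note vc_correct[OF assms(1) vp]
  ultimately show ?thesis using n3 by linarith
qed

lemma out_bound:
  assumes "v < n" "F v \<noteq> z v"
  shows "card {u. u < n \<and> F u = z u \<and> bad q c F v u} \<le> deg n q c z v + 2 * deg n q c z p + 1"
proof -
  have vp: "v \<noteq> p" using assms Fp zp by auto
  let ?W = "{u\<in>AA v. (c v u + c u p) mod q \<noteq> F v}"
  let ?C = "{u. u < n \<and> u \<noteq> p \<and> bad q c z p u}"
  have sub: "{u. u < n \<and> F u = z u \<and> bad q c F v u} \<subseteq> {p} \<union> ?C \<union> ?W"
  proof
    fix u assume u: "u \<in> {u. u < n \<and> F u = z u \<and> bad q c F v u}"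
    show "u \<in> {p} \<union> ?C \<union> ?W"
    proof (cases "u = p \<or> bad q c z p u")
      case True then show ?thesis using u by auto
    next
      case False
      then have up: "u \<noteq> p" "\<not> bad q c z p u" by auto
      have uv: "u \<noteq> v" using u assms by auto
      have "(c v u + c u p) mod q \<noteq> F v"
      proof
        assume h: "(c v u + c u p) mod q = F v"
        have d1: "q dvd (c v u + c u p - F v)" using h
          by (metis dvd_of_mod_eq mod_mod_trivial)
        have d2: "q dvd (- z u - c p u)" using up(2) zp unfolding bad_def by (simp add: mod_eq_dvd_iff)
        have d3: "q dvd (c p u + c u p)" using antisym_dvd[of p u] up u pn by simp
        have "F v - F u - c v u = - (c v u + c u p - F v) + (c p u + c u p) + (- z u - c p u)"
          using u by simp
        then have "q dvd (F v - F u - c v u)" using d1 d2 d3 by (metis dvd_add dvd_minus_iff)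
        then have "\<not> bad q c F v u" unfolding bad_def by (simp add: mod_eq_dvd_iff)
        then show False using u by simp
      qed
      then show ?thesis using u up uv unfolding AA_def by auto
    qed
  qed
  have "card {u. u < n \<and> F u = z u \<and> bad q c F v u} \<le> card ({p} \<union> ?C \<union> ?W)"
    by (rule card_mono[OF _ sub]) (auto simp: AA_def)
  also have "\<dots> \<le> card ({p} \<union> ?C) + card ?W" by (rule card_Un_le)
  also have "\<dots> \<le> 1 + card ?C + card ?W" using card_Un_le[of "{p}" ?C] by simp
  finally have 1: "card {u. u < n \<and> F u = z u \<and> bad q c F v u} \<le> 1 + card ?C + card ?W" .
  have "card ?W + vote_count n q c p v (F v) = card (AA v)"
    unfolding vc_set using AA_fin by (subst card_Un_disjoint[symmetric]) (auto intro: arg_cong[where f=card])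
  moreover have "vote_count n q c p v (z v) \<le> vote_count n q c p v (F v)"
    using plur assms z_range[of v] unfolding plurality_label_def by auto
  moreover note vc_correct[OF assms(1) vp] AA_card[OF assms(1) vp]
  moreover have "card ?C = deg n q c z p" unfolding deg_def by (rule arg_cong[where f=card]) auto
  ultimately show ?thesis using 1 n3 by linarith
qed

definition "ee x v u = (if u \<noteq> v \<and> bad q c x v u then 1 else (0::int))"
definition "SS = {v. v < n \<and> F v \<noteq> z v}"
definition "TT = {v. v < n \<and> F v = z v}"

lemma I_split: "{..<n} = SS \<union> TT" "SS \<inter> TT = {}" "finite SS" "finite TT"
  unfolding SS_def TT_def by auto

lemma sum_split: "(\<Sum>u<n. g u) = (\<Sum>u\<in>SS. g u) + (\<Sum>u\<in>TT. (g u::int))"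
  using I_split by (simp add: sum.union_disjoint)

lemma deg_sum: "int (deg n q c x v) = (\<Sum>u<n. ee x v u)"
proof -
  have "(\<Sum>u<n. ee x v u) = int (card {u\<in>{..<n}. u \<noteq> v \<and> bad q c x v u})"
    unfolding ee_def by (rule sum_if_card) simp
  also have "{u\<in>{..<n}. u \<noteq> v \<and> bad q c x v u} = {u. u < n \<and> u \<noteq> v \<and> bad q c x v u}" by auto
  finally show ?thesis unfolding deg_def by simp
qed

lemma ee_sym: "u < n \<Longrightarrow> v < n \<Longrightarrow> ee x v u = ee x u v"
  unfolding ee_def using bad_sym[OF valid, of u v x] by auto

lemma DD_split: "int (DD n q c x) = (\<Sum>v\<in>TT. \<Sum>u\<in>TT. ee x v u) + 2 * (\<Sum>v\<in>SS. \<Sum>u\<in>TT. ee x v u)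
     + (\<Sum>v\<in>SS. \<Sum>u\<in>SS. ee x v u)"
proof -
  have "int (DD n q c x) = (\<Sum>v<n. \<Sum>u<n. ee x v u)"
    unfolding DD_def by (simp add: deg_sum)
  also have "\<dots> = (\<Sum>v\<in>SS. \<Sum>u\<in>SS. ee x v u) + (\<Sum>v\<in>SS. \<Sum>u\<in>TT. ee x v u)
     + (\<Sum>v\<in>TT. \<Sum>u\<in>SS. ee x v u) + (\<Sum>v\<in>TT. \<Sum>u\<in>TT. ee x v u)"
    by (simp add: sum_split sum.distrib)
  also have "(\<Sum>v\<in>TT. \<Sum>u\<in>SS. ee x v u) = (\<Sum>u\<in>SS. \<Sum>v\<in>TT. ee x v u)"
    by (rule sum.swap)
  also have "\<dots> = (\<Sum>v\<in>SS. \<Sum>u\<in>TT. ee x v u)"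
    by (rule sum.cong[OF refl], rule sum.cong[OF refl], rule ee_sym) (auto simp: SS_def TT_def)
  finally show ?thesis by simp
qed

lemma TT_eq: "(\<Sum>v\<in>TT. \<Sum>u\<in>TT. ee F v u) = (\<Sum>v\<in>TT. \<Sum>u\<in>TT. ee z v u)"
  by (rule sum.cong[OF refl], rule sum.cong[OF refl]) (auto simp: TT_def ee_def bad_def)

lemma SS_le: "(\<Sum>v\<in>SS. \<Sum>u\<in>SS. ee x v u) \<le> int (card SS) * int (card SS) - int (card SS)"
proof -
  have "(\<Sum>v\<in>SS. \<Sum>u\<in>SS. ee x v u) \<le> (\<Sum>v\<in>SS. \<Sum>u\<in>SS. if u \<noteq> v then 1 else 0)"
    by (intro sum_mono) (auto simp: ee_def)
  also have "\<dots> = (\<Sum>v\<in>SS. int (card SS) - 1)"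
  proof (rule sum.cong[OF refl])
    fix v assume v: "v \<in> SS"
    have "(\<Sum>u\<in>SS. if u \<noteq> v then 1 else (0::int)) = int (card {u\<in>SS. u \<noteq> v})"
      by (rule sum_if_card) (simp add: I_split)
    also have "{u\<in>SS. u \<noteq> v} = SS - {v}" by auto
    also have "int (card (SS - {v})) = int (card SS) - 1"
    proof -
      have "card SS > 0" using v I_split(3) card_gt_0_iff by blast
      then show ?thesis using v I_split(3) by (simp add: card_Diff_singleton of_nat_diff)
    qed
    finally show "(\<Sum>u\<in>SS. if u \<noteq> v then 1 else (0::int)) = int (card SS) - 1" .
  qed
  also have "\<dots> = int (card SS) * int (card SS) - int (card SS)" by (simp add: algebra_simps)
  finally show ?thesis .
qed

lemma ST_F: "(\<Sum>v\<in>SS. \<Sum>u\<in>TT. ee F v u) \<le> (\<Sum>v\<in>SS. int (deg n q c z v)) + int (card SS) * (2 * int (deg n q c z p) + 1)"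
proof -
  have "(\<Sum>v\<in>SS. \<Sum>u\<in>TT. ee F v u) \<le> (\<Sum>v\<in>SS. int (deg n q c z v) + (2 * int (deg n q c z p) + 1))"
  proof (rule sum_mono)
    fix v assume v: "v \<in> SS"
    have "(\<Sum>u\<in>TT. ee F v u) = int (card {u\<in>TT. u \<noteq> v \<and> bad q c F v u})"
      unfolding ee_def by (rule sum_if_card) (simp add: I_split)
    also have "{u\<in>TT. u \<noteq> v \<and> bad q c F v u} = {u. u < n \<and> F u = z u \<and> bad q c F v u}"
      using v by (auto simp: TT_def SS_def)
    also have "int (card \<dots>) \<le> int (deg n q c z v) + (2 * int (deg n q c z p) + 1)"
      using out_bound[of v] v by (simp add: SS_def)
    finally show "(\<Sum>u\<in>TT. ee F v u) \<le> int (deg n q c z v) + (2 * int (deg n q c z p) + 1)" .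
  qed
  also have "\<dots> = (\<Sum>v\<in>SS. int (deg n q c z v)) + int (card SS) * (2 * int (deg n q c z p) + 1)"
    by (simp add: sum.distrib)
  finally show ?thesis .
qed

lemma degS: "(\<Sum>v\<in>SS. int (deg n q c z v)) = (\<Sum>v\<in>SS. \<Sum>u\<in>TT. ee z v u) + (\<Sum>v\<in>SS. \<Sum>u\<in>SS. ee z v u)"
  by (simp add: deg_sum sum_split sum.distrib)

lemma main_comb:
  "int (DD n q c F) \<le> int (DD n q c z) + 2 * int (card SS) ^ 2 + 4 * int (card SS) * int (deg n q c z p)"
  using DD_split[of F] DD_split[of z] TT_eq SS_le[of F] SS_le[of z] ST_F degS
  by (simp add: power2_eq_square algebra_simps)

lemma S_sum: "int (card SS) * (int n - 2) \<le> 2 * int (DD n q c z) + 2 * int (card SS) * int (deg n q c z p)"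
proof -
  have "int (card SS) * (int n - 2) = (\<Sum>v\<in>SS. int n - 2)" by simp
  also have "\<dots> \<le> (\<Sum>v\<in>SS. 2 * int (deg n q c z v) + 2 * int (deg n q c z p))"
    by (rule sum_mono) (use S_cond in \<open>auto simp: SS_def\<close>)
  also have "\<dots> = 2 * (\<Sum>v\<in>SS. int (deg n q c z v)) + 2 * int (card SS) * int (deg n q c z p)"
    by (simp add: sum.distrib sum_distrib_left)
  also have "(\<Sum>v\<in>SS. int (deg n q c z v)) \<le> (\<Sum>v<n. int (deg n q c z v))"
    by (rule sum_mono2) (auto simp: SS_def)
  also have "\<dots> = int (DD n q c z)" unfolding DD_def by simp
  finally show ?thesis by simp
qed

lemma core_ex: "\<exists>s::nat. int (DD n q c F) \<le> int (DD n q c y) + 2 * int s ^ 2 + 4 * int s * int (deg n q c y p)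
   \<and> int s * (int n - 2) \<le> 2 * int (DD n q c y) + 2 * int s * int (deg n q c y p)"
proof -
  have dz: "deg n q c z v = deg n q c y v" for v unfolding deg_def using badz_eq by simp
  have Dz: "DD n q c z = DD n q c y" unfolding DD_def using dz by simp
  show ?thesis using main_comb S_sum unfolding Dz dz by blast
qed

end

lemma core:
  assumes "valid_instance n q c" "n \<ge> 3" "p < n" "\<forall>v<n. plurality_label n q c p v (F v)"
  shows "\<exists>s::nat. int (DD n q c F) \<le> int (DD n q c y) + 2 * int s ^ 2 + 4 * int s * int (deg n q c y p)
   \<and> int s * (int n - 2) \<le> 2 * int (DD n q c y) + 2 * int s * int (deg n q c y p)"
  by (rule core_ex[OF assms refl])



definition ceb :: "real \<Rightarrow> real" where
  "ceb e = 1 - sqrt e - 2 * e"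
definition cef :: "real \<Rightarrow> real" where
  "cef e = 8 * (1 + sqrt e) / (ceb e)\<^sup>2 + 8 / ceb e"

lemma ceb_pos: "0 \<le> e \<Longrightarrow> e < 1/16 \<Longrightarrow> ceb e > 1/2"
proof -
  assume e: "0 \<le> e" "e < 1/16"
  have "sqrt e < sqrt (1/16)" using e by (simp add: real_sqrt_less_iff)
  also have "sqrt (1/16) = (1/4::real)" by (simp add: real_sqrt_divide)
  finally show ?thesis unfolding ceb_def using e by simp
qed

lemma cef_nonneg: "0 \<le> e \<Longrightarrow> e < 1/16 \<Longrightarrow> cef e \<ge> 0"
  using ceb_pos[of e] unfolding cef_def by (simp add: add_nonneg_nonneg)

lemma numeric:
  fixes k s d n e :: real
  assumes e: "0 \<le> e" "e < 1/16" and n: "n \<ge> 3" and k: "k \<ge> 0" "k = 0 \<or> k \<ge> 1"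
    and s: "s \<ge> 0" and d: "d \<ge> 0"
    and km: "k \<le> e * (n * (n - 1) / 2)" and dk: "n * d \<le> 2 * k"
    and sk: "s * (n - 2 - 2 * d) \<le> 4 * k"
  shows "k + s\<^sup>2 + 2 * s * d \<le> (e + cef e * e\<^sup>2) * (n * (n - 1) / 2)"
proof (cases "k = 0")
  case True
  then have "d = 0" using dk d n by (smt (verit) mult_pos_pos)
  then have "s * (n - 2) \<le> 0" using sk True by simp
  then have "s = 0" using s n by (smt (verit) mult_pos_pos)
  have "0 \<le> (e + cef e * e\<^sup>2) * (n * (n - 1) / 2)"
    using cef_nonneg[OF e] e n by (intro mult_nonneg_nonneg add_nonneg_nonneg) auto
  then show ?thesis using True \<open>d = 0\<close> \<open>s = 0\<close> by simp
next
  case False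
  then have k1: "k \<ge> 1" using k by simp
  define N where "N = n - 1"
  define a where "a = sqrt e"
  define b where "b = ceb e"
  have N2: "N \<ge> 2" using n N_def by simp
  have nN: "n = N + 1" using N_def by simp
  have b: "b > 1/2" using ceb_pos[OF e] b_def by simp
  have bdef: "b = 1 - a - 2 * e" unfolding b_def a_def ceb_def by simp
  have a0: "a \<ge> 0" using e a_def by simp
  have aa: "a * a = e" using e a_def by simp
  have m: "n * (n - 1) / 2 = n * N / 2" using N_def by simp
  have "1 \<le> e * (n * N / 2)" using k1 km m by simp
  also have "\<dots> \<le> e * (N * N)" using e N2 nN by (intro mult_left_mono) (auto simp: field_simps)
  finally have "1 \<le> (a * N) * (a * N)" using aa by (simp add: algebra_simps)
  then have aN: "a * N \<ge> 1"
  proof -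
    assume h: "1 \<le> (a * N) * (a * N)"
    show ?thesis
    proof (rule ccontr)
      assume "\<not> a * N \<ge> 1"
      then have l: "a * N < 1" by simp
      have "0 \<le> a * N" using a0 N2 by simp
      then have "(a * N) * (a * N) \<le> (a * N) * 1" using l by (intro mult_left_mono) auto
      then show False using h l by simp
    qed
  qed
  have dN: "d \<le> e * N"
  proof -
    have k2: "k \<le> e * (n * N / 2)" using km m by simp
    have "e * (n * N / 2) = (n * (e * N)) / 2" by (simp add: field_simps)
    then have "2 * k \<le> n * (e * N)" using k2 by linarith
    then have "n * d \<le> n * (e * N)" using dk by linarith
    then show ?thesis using n by simp
  qed
  have T: "n - 2 - 2 * d \<ge> N * b"
  proof -
    have "n - 2 - 2 * d \<ge> N - a * N - 2 * e * N" using dN aN nN by simp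
    also have "N - a * N - 2 * e * N = N * b" unfolding bdef by (simp add: algebra_simps)
    finally show ?thesis .
  qed
  have Nb: "N * b > 0" using N2 b by simp
  have "s * (N * b) \<le> s * (n - 2 - 2 * d)" using T s by (simp add: mult_left_mono)
  also have "\<dots> \<le> 4 * k" by (rule sk)
  also have "\<dots> \<le> 4 * (e * (n * N / 2))" using km unfolding m by linarith
  also have "\<dots> = (2 * e * n / b) * (N * b)" using b by (simp add: field_simps)
  finally have sb0: "s * (N * b) \<le> (2 * e * n / b) * (N * b)" .
  have sb: "s \<le> 2 * e * n / b" by (rule mult_right_le_imp_le[OF sb0 Nb])
  have "s\<^sup>2 + 2 * s * d = s * (s + 2 * d)" by (simp add: power2_eq_square algebra_simps)
  also have "\<dots> \<le> (2 * e * n / b) * (2 * e * n / b + 2 * (e * N))"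
    using sb dN s d by (intro mult_mono add_mono) auto
  also have "\<dots> = 4 * e\<^sup>2 * (n * n) / b\<^sup>2 + 4 * e\<^sup>2 * (n * N) / b"
    using b by (simp add: field_simps power2_eq_square)
  also have "\<dots> \<le> 4 * e\<^sup>2 * ((1 + a) * (n * N)) / b\<^sup>2 + 4 * e\<^sup>2 * (n * N) / b"
  proof -
    have "n \<le> (1 + a) * N" using aN nN by (simp add: algebra_simps)
    then have "n * n \<le> n * ((1 + a) * N)" using n by (intro mult_left_mono) auto
    then have "n * n \<le> (1 + a) * (n * N)" by (simp add: algebra_simps)
    then show ?thesis using b n by (intro add_mono divide_right_mono mult_left_mono) auto
  qed
  also have "\<dots> = cef e * e\<^sup>2 * (n * N / 2)"
    unfolding cef_def b_def[symmetric] a_def[symmetric] using b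
    by (simp add: field_simps power2_eq_square)
  finally have "s\<^sup>2 + 2 * s * d \<le> cef e * e\<^sup>2 * (n * N / 2)" .
  then show ?thesis using km unfolding m by (simp add: algebra_simps)
qed

lemma cef_lim: "(cef \<longlongrightarrow> 16) (at_right 0)"
proof -
  have "((\<lambda>e. 8 * (1 + sqrt e) / (1 - sqrt e - 2 * e)\<^sup>2 + 8 / (1 - sqrt e - 2 * e)) \<longlongrightarrow>
        8 * (1 + sqrt 0) / (1 - sqrt 0 - 2 * 0)\<^sup>2 + 8 / (1 - sqrt 0 - 2 * 0)) (at_right (0::real))"
    by (intro tendsto_intros) (auto intro!: tendsto_ident_at)
  then show ?thesis unfolding cef_def ceb_def by simp
qed



lemma viol_cong: assumes "\<forall>v<n. x v = x' v" shows "violations n q c x = violations n q c x'"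
proof -
  have h: "\<And>u v. u < n \<Longrightarrow> v < n \<Longrightarrow> x u - x v = x' u - x' v" using assms by simp
  show ?thesis unfolding violations_def
    by (intro arg_cong[where f=card] Collect_cong) (metis h)
qed

lemma choose2_real: "real (n choose 2) = real n * (real n - 1) / 2"
proof (cases n)
  case 0 then show ?thesis by simp
next
  case (Suc k)
  have ev: "even (n * (n - 1))" by (cases "even n") auto
  have "2 * (n choose 2) = n * (n - 1)"
    unfolding choose_two using ev by (rule dvd_mult_div_cancel)
  then have "2 * real (n choose 2) = real n * real (n - 1)"
    by (metis of_nat_mult of_nat_numeral)
  then show ?thesis using Suc by (simp add: of_nat_diff)
qed

lemma deg_le: "deg n q c x v \<le> n - 1" if "v < n"
proof -
  have "deg n q c x v \<le> card ({..<n} - {v})"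
    unfolding deg_def by (rule card_mono) auto
  then show ?thesis using that by simp
qed

lemma viol_le: assumes "valid_instance n q c" shows "real (violations n q c x) \<le> real (n choose 2)"
proof -
  have "DD n q c x \<le> (\<Sum>v<n. n - 1)" unfolding DD_def by (rule sum_mono) (rule deg_le, simp)
  then have "2 * violations n q c x \<le> n * (n - 1)" using viol_DD[OF assms] by simp
  then have "2 * real (violations n q c x) \<le> real n * real (n - 1)"
    by (metis of_nat_le_iff of_nat_mult of_nat_numeral)
  then show ?thesis unfolding choose2_real
    by (cases n) (auto simp: of_nat_diff)
qed

theorem theorem2:
  shows "\<exists>ce :: real \<Rightarrow> real. (ce \<longlongrightarrow> 16) (at_right 0) \<and>
    (\<forall>(\<epsilon>::real) (n::nat) (q::int) (c :: nat \<Rightarrow> nat \<Rightarrow> int) (x :: nat \<Rightarrow> int).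
       0 \<le> \<epsilon> \<and> \<epsilon> < 1/2 \<and> n \<ge> 3 \<and> valid_instance n q c \<and>
       (\<exists>y. assignment n q y \<and> real (violations n q c y) \<le> \<epsilon> * real (n choose 2)) \<and>
       voting_output n q c x
       \<longrightarrow> real (violations n q c x) \<le> (\<epsilon> + ce \<epsilon> * \<epsilon>\<^sup>2) * real (n choose 2))"
proof -
  let ?ce = "\<lambda>e::real. if e < 1/16 then cef e else 256"
  show ?thesis
  proof (rule exI[where x="?ce"], intro conjI allI impI)
  have ev: "eventually (\<lambda>e. cef e = ?ce e) (at_right (0::real))"
    using eventually_at_right_real[of 0 "1/16::real"] by (auto elim: eventually_mono)
  show "(?ce \<longlongrightarrow> 16) (at_right 0)"
    by (rule Lim_transform_eventually[OF cef_lim ev])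
next
  fix e :: real and n :: nat and q c and x :: "nat \<Rightarrow> int"
  assume A: "0 \<le> e \<and> e < 1/2 \<and> n \<ge> 3 \<and> valid_instance n q c \<and>
       (\<exists>y. assignment n q y \<and> real (violations n q c y) \<le> e * real (n choose 2)) \<and>
       voting_output n q c x"
  then have e0: "0 \<le> e" and n3: "n \<ge> 3" and valid: "valid_instance n q c" and vo: "voting_output n q c x"
    by auto
  obtain y where yv: "real (violations n q c y) \<le> e * real (n choose 2)" using A by auto
  obtain F p0 where plur: "\<forall>p<n. \<forall>v<n. plurality_label n q c p v (F p v)"
    and p0: "p0 < n" "\<forall>v<n. x v = F p0 v" "\<forall>p'<n. violations n q c (F p0) \<le> violations n q c (F p')"
    using vo unfolding voting_output_def by blast
  have vx: "violations n q c x = violations n q c (F p0)" using viol_cong p0(2) by blast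
  show "real (violations n q c x) \<le> (e + ?ce e * e\<^sup>2) * real (n choose 2)"
  proof (cases "e < 1/16")
    case False
    have "real (violations n q c x) \<le> 1 * real (n choose 2)" using viol_le[OF valid] by simp
    also have "\<dots> \<le> (e + 256 * e\<^sup>2) * real (n choose 2)"
    proof (rule mult_right_mono)
      have "(1/16::real)\<^sup>2 \<le> e\<^sup>2" using False by (intro power_mono) auto
      then show "1 \<le> e + 256 * e\<^sup>2" using e0 by (simp add: power2_eq_square)
    qed simp
    finally show ?thesis using False by simp
  next
    case True
    obtain p where pn: "p < n" and pmin: "\<forall>p'<n. deg n q c y p \<le> deg n q c y p'"
    proof -
      have "finite (deg n q c y ` {..<n})" "deg n q c y ` {..<n} \<noteq> {}" using n3 by (auto simp: lessThan_empty_iff)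
      then obtain w where "w \<in> {..<n}" "deg n q c y w = Min (deg n q c y ` {..<n})"
        using Min_in by (metis imageE)
      then show ?thesis using that by auto
    qed
    obtain s :: nat where s1: "int (DD n q c (F p)) \<le> int (DD n q c y) + 2 * int s ^ 2 + 4 * int s * int (deg n q c y p)"
      and s2: "int s * (int n - 2) \<le> 2 * int (DD n q c y) + 2 * int s * int (deg n q c y p)"
      using core[OF valid n3 pn, of "F p" y] plur pn by blast
    define k where "k = violations n q c y"
    define d where "d = deg n q c y p"
    have Dy: "DD n q c y = 2 * k" using viol_DD[OF valid] k_def by simp
    have DF: "DD n q c (F p) = 2 * violations n q c (F p)" using viol_DD[OF valid] by simp
    have nd: "n * d \<le> DD n q c y"
    proof -
      have "(\<Sum>v<n. d) \<le> DD n q c y" unfolding DD_def d_def using pmin by (intro sum_mono) auto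
      then show ?thesis by simp
    qed
    have r1: "real (violations n q c (F p)) \<le> real k + (real s)\<^sup>2 + 2 * real s * real d"
    proof -
      have "int (violations n q c (F p)) \<le> int k + int s ^ 2 + 2 * int s * int d"
        using s1 unfolding DF Dy d_def by simp
      then have "real_of_int (int (violations n q c (F p))) \<le> real_of_int (int k + int s ^ 2 + 2 * int s * int d)"
        by (simp only: of_int_le_iff)
      then show ?thesis by simp
    qed
    have r2: "real s * (real n - 2 - 2 * real d) \<le> 4 * real k"
    proof -
      have "int s * (int n - 2 - 2 * int d) \<le> 4 * int k"
        using s2 unfolding Dy d_def by (simp add: algebra_simps)
      then have "real_of_int (int s * (int n - 2 - 2 * int d)) \<le> real_of_int (4 * int k)"
        by (simp only: of_int_le_iff)
      then show ?thesis by simp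
    qed
    have r3: "real n * real d \<le> 2 * real k"
      using nd unfolding Dy by (metis of_nat_le_iff of_nat_mult of_nat_numeral)
    have r4: "real k \<le> e * (real n * (real n - 1) / 2)" using yv k_def choose2_real by simp
    have "real (violations n q c (F p)) \<le> (e + cef e * e\<^sup>2) * (real n * (real n - 1) / 2)"
      using r1 numeric[OF e0 True _ _ _ _ _ r4 r3 r2] n3 by fastforce
    moreover have "violations n q c x \<le> violations n q c (F p)" using vx p0(3) pn by simp
    ultimately have "real (violations n q c x) \<le> (e + cef e * e\<^sup>2) * (real n * (real n - 1) / 2)"
      by (meson of_nat_le_iff order_trans)
    then show ?thesis using True unfolding choose2_real by simp
  qed
  qed
qed


end
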